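(* Let $\alpha,\delta\in\mathbb{F}\setminus\{\frac12\}$ with $\alpha\neq\delta$, and let $\mathbf{A}$ be the 5-dimensional LV algebra with natural basis $e_1,\dots,e_5$ in which $e_1e_k=\alpha e_1+(1-\alpha)e_k$ for $k\in\{2,3,5\}$, $e_1e_4=\delta e_1+(1-\delta)e_4$, and $e_ie_j=\frac12(e_i+e_j)$ for all $i,j\in\{2,3,4,5\}$. Then $\mathrm{Der}(\mathbf{A})=\{f\in L(\mathbf{A}) : f(e_1)=f(e_4)=0 \text{ and } \mathrm{Im}(f)\subseteq\langle e_2-e_3,\,e_2-e_5\rangle\}$.
   Context: Let $\mathbb{F}$ be a field of characteristic different from $2$. A Lotka–Volterra (LV) algebra of dimension $5$ over $\mathbb{F}$ is a commutative (not necessarily associative) $\mathbb{F}$-algebra $\mathbf{A}$ with a basis $e_1,\dots,e_5$ (the natural basis) such that $e_ie_j=\alpha_{ij}e_i+\alpha_{ji}e_j$ with $\alpha_{ij}\in\mathbb{F}$, $\alpha_{ii}=\frac12$ and $\alpha_{ij}+\alpha_{ji}=1$ for all $i,j$. A derivation is a linear map $D:\mathbf{A}\to\mathbf{A}$ with $D(uv)=D(u)v+uD(v)$ for all $u,v$; $\mathrm{Der}(\mathbf{A})$ is the set of derivations, $L(\mathbf{A})$ the set of linear maps $\mathbf{A}\to\mathbf{A}$, and $\langle x_1,\dots,x_k\rangle$ the linear span. *)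

theory Defs
  imports "HOL-Analysis.Analysis"
begin

text \<open>Index set of the natural basis e_1,...,e_5.\<close>
datatype idx5 = I1 | I2 | I3 | I4 | I5

lemma UNIV_idx5: "(UNIV :: idx5 set) = {I1, I2, I3, I4, I5}"
  by (auto intro: idx5.exhaust)

instance idx5 :: finite
  by standard (simp add: UNIV_idx5)

text \<open>The algebra A is the F-vector space F^5 = 'a^idx5 (coordinates w.r.t. the natural basis).\<close>
definition nb :: "idx5 \<Rightarrow> 'a::field ^ idx5" where
  "nb i = (\<chi> j. if j = i then 1 else 0)"

text \<open>LV product determined by structure constants: e_i e_j = alpha i j e_i + alpha j i e_j,
  extended bilinearly.\<close>
definition lv_mult :: "(idx5 \<Rightarrow> idx5 \<Rightarrow> 'a::field) \<Rightarrow> 'a ^ idx5 \<Rightarrow> 'a ^ idx5 \<Rightarrow> 'a ^ idx5" where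
  "lv_mult alpha u v =
     (\<Sum>i\<in>UNIV. \<Sum>j\<in>UNIV. (u $ i * v $ j) *s (alpha i j *s nb i + alpha j i *s nb j))"

text \<open>Structure constants of the algebra in the theorem.\<close>
definition alphaA :: "'a::field \<Rightarrow> 'a \<Rightarrow> idx5 \<Rightarrow> idx5 \<Rightarrow> 'a" where
  "alphaA a d i j =
     (if i = j then 1/2
      else if i = I1 then (if j = I4 then d else a)
      else if j = I1 then (if i = I4 then 1 - d else 1 - a)
      else 1/2)"

text \<open>Derivations: linear maps D with D(uv) = D(u)v + uD(v).\<close>
definition is_derivation :: "('a::field ^ idx5 \<Rightarrow> 'a ^ idx5 \<Rightarrow> 'a ^ idx5) \<Rightarrow> ('a ^ idx5 \<Rightarrow> 'a ^ idx5) \<Rightarrow> bool" where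
  "is_derivation pr D \<longleftrightarrow> Vector_Spaces.linear (*s) (*s) D \<and>
     (\<forall>u v. D (pr u v) = pr (D u) v + pr u (D v))"

end

theory Submission imports Defs begin

lemma all_idx5: "(\<forall>i::idx5. P i) \<longleftrightarrow> P I1 \<and> P I2 \<and> P I3 \<and> P I4 \<and> P I5"
  by (metis idx5.exhaust)

lemma sum_idx5: "(\<Sum>i\<in>(UNIV::idx5 set). f i) = f I1 + f I2 + f I3 + f I4 + f I5"
  by (simp add: UNIV_idx5 add.assoc)

lemma mult_comp:
  "lv_mult al u v $ k = u$k * (\<Sum>j\<in>UNIV. al k j * v$j) + v$k * (\<Sum>j\<in>UNIV. al k j * u$j)"
  unfolding lv_mult_def
  by (cases k; simp add: sum_component nb_def sum_idx5 algebra_simps)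

lemma lin_exp:
  assumes "Vector_Spaces.linear (*s) (*s) f"
  shows "f x $ m = (\<Sum>i\<in>UNIV. x$i * f (nb i) $ m)"
proof -
  have "f x = f (\<Sum>i\<in>UNIV. x $ i *s nb i)"
    using basis_expansion[of x] by (simp add: nb_def axis_def)
  also have "\<dots> = (\<Sum>i\<in>UNIV. x $ i *s f (nb i))"
    using assms by (simp add: vec.linear_sum vec.linear_scale)
  finally show ?thesis by (simp add: sum_component)
qed

lemma span_char:
  "(v::'a::field^idx5) \<in> vec.span {nb I2 - nb I3, nb I2 - nb I5} \<longleftrightarrow>
     v$I1 = 0 \<and> v$I4 = 0 \<and> v$I2 + v$I3 + v$I5 = 0"
proof
  assume "v \<in> vec.span {nb I2 - nb I3, nb I2 - nb I5}"
  then obtain k1 k2 where "v - k1 *s (nb I2 - nb I3) - k2 *s (nb I2 - nb I5) = 0"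
    by (auto simp: vec.span_insert)
  then have "v = k1 *s (nb I2 - nb I3) + k2 *s (nb I2 - nb I5)"
    by (simp add: algebra_simps)
  then show "v$I1 = 0 \<and> v$I4 = 0 \<and> v$I2 + v$I3 + v$I5 = 0"
    by (simp add: nb_def)
next
  assume h: "v$I1 = 0 \<and> v$I4 = 0 \<and> v$I2 + v$I3 + v$I5 = 0"
  have "v = (- v$I3) *s (nb I2 - nb I3) + (- v$I5) *s (nb I2 - nb I5)"
    using h by (simp add: vec_eq_iff all_idx5 nb_def) (simp add: algebra_simps eq_neg_iff_add_eq_0)
  then show "v \<in> vec.span {nb I2 - nb I3, nb I2 - nb I5}"
    by (metis vec.span_add vec.span_scale vec.span_base insertI1 insertI2 singletonI)
qed

definition lam :: "'a::field \<Rightarrow> 'a^idx5 \<Rightarrow> 'a" where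
  "lam a u = (1-a)*u$I1 + (u$I2+u$I3+u$I4+u$I5)/2"

lemma sumA: "(\<Sum>j\<in>UNIV. alphaA a d k j * w$j) =
  (if k = I1 then w$I1/2 + a*(w$I2+w$I3+w$I5) + d*w$I4
   else if k = I4 then (1-d)*w$I1 + (w$I2+w$I3+w$I4+w$I5)/2
   else (1-a)*w$I1 + (w$I2+w$I3+w$I4+w$I5)/2)"
  by (cases k) (simp_all add: sum_idx5 alphaA_def algebra_simps add_divide_distrib)

lemma multW:
  fixes a d :: "'a::field"
  assumes "(2::'a) \<noteq> 0" "w$I1 = 0" "w$I4 = 0" "w$I5 = - w$I2 - w$I3"
  shows "lv_mult (alphaA a d) u w = lam a u *s w"
  unfolding vec_eq_iff all_idx5 using assms
  by (simp add: mult_comp sumA lam_def) (simp add: field_simps)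
lemma sup_dir:
  fixes a d :: "'a::field"
  assumes char: "(2::'a) \<noteq> 0"
    and lin: "Vector_Spaces.linear (*s) (*s) f" and f1: "f (nb I1) = 0" and f4: "f (nb I4) = 0"
    and rg: "range f \<subseteq> vec.span {nb I2 - nb I3, nb I2 - nb I5}"
  shows "f (lv_mult (alphaA a d) u v) = lv_mult (alphaA a d) (f u) v + lv_mult (alphaA a d) u (f v)"
proof -
  have sp: "f x $ I1 = 0 \<and> f x $ I4 = 0 \<and> f x $ I5 = - f x $ I2 - f x $ I3" for x
  proof -
    have "f x \<in> vec.span {nb I2 - nb I3, nb I2 - nb I5}" using rg by auto
    then have "f x $ I1 = 0 \<and> f x $ I4 = 0 \<and> f x $ I2 + f x $ I3 + f x $ I5 = 0"
      by (simp only: span_char)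
    then show ?thesis by (simp add: eq_neg_iff_add_eq_0 algebra_simps)
  qed
  define F2 where "F2 = f (nb I2)"
  define F3 where "F3 = f (nb I3)"
  define F5 where "F5 = f (nb I5)"
  have e: "f x = x$I2 *s F2 + x$I3 *s F3 + x$I5 *s F5" for x
    unfolding vec_eq_iff
  proof
    fix m show "f x $ m = (x$I2 *s F2 + x$I3 *s F3 + x$I5 *s F5) $ m"
      using lin_exp[OF lin, of x m] f1 f4 by (simp add: sum_idx5 F2_def F3_def F5_def)
  qed
  have comm: "lv_mult (alphaA a d) x y = lv_mult (alphaA a d) y x" for x y
    by (simp add: vec_eq_iff mult_comp algebra_simps)
  have c: "k \<noteq> I1 \<Longrightarrow> k \<noteq> I4 \<Longrightarrow> lv_mult (alphaA a d) u v $ k = u$k * lam a v + v$k * lam a u" for k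
    by (simp add: mult_comp sumA lam_def)
  have "f (lv_mult (alphaA a d) u v) = lam a v *s f u + lam a u *s f v"
    unfolding e[of "lv_mult (alphaA a d) u v"] e[of u] e[of v]
    by (simp add: c algebra_simps vec_eq_iff)
  also have "\<dots> = lv_mult (alphaA a d) (f u) v + lv_mult (alphaA a d) u (f v)"
    using multW[OF char sp[THEN conjunct1] sp[THEN conjunct2, THEN conjunct1] sp[THEN conjunct2, THEN conjunct2]]
    by (simp add: comm[of "f u" v])
  finally show ?thesis .
qed
lemma nb_comp: "nb i $ j = (if j = i then 1 else 0)"
  by (simp add: nb_def)

lemma deq:
  assumes "is_derivation (lv_mult al) D"
  shows "(\<Sum>k\<in>UNIV. lv_mult al (nb i) (nb j) $ k * D (nb k) $ m) =
     lv_mult al (D (nb i)) (nb j) $ m + lv_mult al (nb i) (D (nb j)) $ m"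
proof -
  have lin: "Vector_Spaces.linear (*s) (*s) D" and h: "D (lv_mult al (nb i) (nb j)) = lv_mult al (D (nb i)) (nb j) + lv_mult al (nb i) (D (nb j))"
    using assms by (auto simp: is_derivation_def)
  show ?thesis using lin_exp[OF lin, of "lv_mult al (nb i) (nb j)" m] h by simp
qed


lemma half_ne: "(2::'a::field) \<noteq> 0 \<Longrightarrow> (a::'a) \<noteq> 1/2 \<Longrightarrow> 2 * a \<noteq> 1 \<and> a * 2 \<noteq> 1"
  by (auto simp: field_simps)

lemma sub_dir:
  fixes a d :: "'a::field"
  assumes char: "(2::'a) \<noteq> 0"
    and ha: "a \<noteq> 1/2" and hd: "d \<noteq> 1/2" and hne: "a \<noteq> d"
    and der: "is_derivation (lv_mult (alphaA a d)) D"
  shows "D (nb I1) = 0 \<and> D (nb I4) = 0 \<and> (\<forall>k. k \<noteq> I1 \<longrightarrow> k \<noteq> I4 \<longrightarrow>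
     D (nb k) $ I1 = 0 \<and> D (nb k) $ I4 = 0 \<and> D (nb k) $ I2 + D (nb k) $ I3 + D (nb k) $ I5 = 0)"
proof -
  note X = mult_comp sumA nb_comp sum_idx5 alphaA_def
  have a1': "2 * a \<noteq> 1" "a * 2 \<noteq> 1" and d1': "2 * d \<noteq> 1" "d * 2 \<noteq> 1" using half_ne[OF char ha] half_ne[OF char hd] by auto
  have two1: "(2::'a) \<noteq> 1" by (metis one_add_one add_cancel_right_right one_neq_zero)
  let ?v = "D (nb I1)"
  have "?v $ I2 = 0" using deq[OF der, of I1 I1 I2] char a1' by (simp add: X)
  moreover have "?v $ I3 = 0" using deq[OF der, of I1 I1 I3] char a1' by (simp add: X)
  moreover have "?v $ I5 = 0" using deq[OF der, of I1 I1 I5] char a1' by (simp add: X)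
  moreover have "?v $ I4 = 0" using deq[OF der, of I1 I1 I4] char d1' by (simp add: X)
  ultimately have "?v $ I1 = 0" using deq[OF der, of I1 I1 I1] char two1 by (simp add: X)
  with \<open>?v $ I2 = 0\<close> \<open>?v $ I3 = 0\<close> \<open>?v $ I4 = 0\<close> \<open>?v $ I5 = 0\<close>
  have D1: "D (nb I1) = 0" by (simp add: vec_eq_iff all_idx5)
  let ?w = "D (nb I4)"
  have w1: "?w $ I1 = 0" using deq[OF der, of I4 I4 I1] char d1' by (simp add: X)
  have "?w $ I4 + (?w $ I2 + (?w $ I3 + ?w $ I5)) = 0" using deq[OF der, of I4 I4 I4] char w1 by (simp add: X)
  moreover have "a * ?w $ I2 + a * ?w $ I3 + d * ?w $ I4 + a * ?w $ I5 = 0"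
    using deq[OF der, of I1 I4 I1] char w1 D1 by (simp add: X)
  ultimately have "(d - a) * ?w $ I4 = 0"
  proof -
    assume h1: "?w $ I4 + (?w $ I2 + (?w $ I3 + ?w $ I5)) = 0"
      and h2: "a * ?w $ I2 + a * ?w $ I3 + d * ?w $ I4 + a * ?w $ I5 = 0"
    have "?w $ I2 + ?w $ I3 + ?w $ I5 = - ?w $ I4" using h1 by (simp add: eq_neg_iff_add_eq_0 ac_simps)
    moreover have "a * (?w $ I2 + ?w $ I3 + ?w $ I5) + d * ?w $ I4 = 0" using h2 by (simp add: algebra_simps)
    ultimately show ?thesis by (simp add: algebra_simps)
  qed
  hence w4: "?w $ I4 = 0" using hne by simp
  have "?w $ I2 = 0" using deq[OF der, of I1 I4 I2] char D1 hne by (simp add: X)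
  moreover have "?w $ I3 = 0" using deq[OF der, of I1 I4 I3] char D1 hne by (simp add: X)
  moreover have "?w $ I5 = 0" using deq[OF der, of I1 I4 I5] char D1 hne by (simp add: X)
  ultimately have D4: "D (nb I4) = 0" using w1 w4 by (simp add: vec_eq_iff all_idx5)
  have GI2: "D (nb I2) $ I1 = 0 \<and> D (nb I2) $ I4 = 0 \<and> D (nb I2) $ I2 + D (nb I2) $ I3 + D (nb I2) $ I5 = 0"
  proof -
    let ?u = "D (nb I2)"
    have u1: "?u $ I1 = 0" using deq[OF der, of I2 I2 I1] char a1' by (simp add: X)
    have h1: "?u $ I2 + ?u $ I3 + ?u $ I4 + ?u $ I5 = 0" using deq[OF der, of I2 I2 I2] char u1 by (simp add: X; simp add: ac_simps)
    have h2: "a * ?u $ I2 + a * ?u $ I3 + d * ?u $ I4 + a * ?u $ I5 = 0" using deq[OF der, of I1 I2 I1] char u1 D1 by (simp add: X; simp add: algebra_simps)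
    have s: "?u $ I2 + ?u $ I3 + ?u $ I5 = - ?u $ I4" using h1 by (simp add: eq_neg_iff_add_eq_0 ac_simps)
    moreover have "a * (?u $ I2 + ?u $ I3 + ?u $ I5) + d * ?u $ I4 = 0" using h2 by (simp add: algebra_simps)
    ultimately have "(d - a) * ?u $ I4 = 0" by (simp add: algebra_simps)
    hence "?u $ I4 = 0" using hne by simp
    thus ?thesis using u1 s by simp
  qed
  have GI3: "D (nb I3) $ I1 = 0 \<and> D (nb I3) $ I4 = 0 \<and> D (nb I3) $ I2 + D (nb I3) $ I3 + D (nb I3) $ I5 = 0"
  proof -
    let ?u = "D (nb I3)"
    have u1: "?u $ I1 = 0" using deq[OF der, of I3 I3 I1] char a1' by (simp add: X)
    have h1: "?u $ I2 + ?u $ I3 + ?u $ I4 + ?u $ I5 = 0" using deq[OF der, of I3 I3 I3] char u1 by (simp add: X; simp add: ac_simps)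
    have h2: "a * ?u $ I2 + a * ?u $ I3 + d * ?u $ I4 + a * ?u $ I5 = 0" using deq[OF der, of I1 I3 I1] char u1 D1 by (simp add: X; simp add: algebra_simps)
    have s: "?u $ I2 + ?u $ I3 + ?u $ I5 = - ?u $ I4" using h1 by (simp add: eq_neg_iff_add_eq_0 ac_simps)
    moreover have "a * (?u $ I2 + ?u $ I3 + ?u $ I5) + d * ?u $ I4 = 0" using h2 by (simp add: algebra_simps)
    ultimately have "(d - a) * ?u $ I4 = 0" by (simp add: algebra_simps)
    hence "?u $ I4 = 0" using hne by simp
    thus ?thesis using u1 s by simp
  qed
  have GI5: "D (nb I5) $ I1 = 0 \<and> D (nb I5) $ I4 = 0 \<and> D (nb I5) $ I2 + D (nb I5) $ I3 + D (nb I5) $ I5 = 0"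
  proof -
    let ?u = "D (nb I5)"
    have u1: "?u $ I1 = 0" using deq[OF der, of I5 I5 I1] char a1' by (simp add: X)
    have h1: "?u $ I2 + ?u $ I3 + ?u $ I4 + ?u $ I5 = 0" using deq[OF der, of I5 I5 I5] char u1 by (simp add: X; simp add: ac_simps)
    have h2: "a * ?u $ I2 + a * ?u $ I3 + d * ?u $ I4 + a * ?u $ I5 = 0" using deq[OF der, of I1 I5 I1] char u1 D1 by (simp add: X; simp add: algebra_simps)
    have s: "?u $ I2 + ?u $ I3 + ?u $ I5 = - ?u $ I4" using h1 by (simp add: eq_neg_iff_add_eq_0 ac_simps)
    moreover have "a * (?u $ I2 + ?u $ I3 + ?u $ I5) + d * ?u $ I4 = 0" using h2 by (simp add: algebra_simps)
    ultimately have "(d - a) * ?u $ I4 = 0" by (simp add: algebra_simps)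
    hence "?u $ I4 = 0" using hne by simp
    thus ?thesis using u1 s by simp
  qed
  have "\<forall>k. k \<noteq> I1 \<longrightarrow> k \<noteq> I4 \<longrightarrow> D (nb k) $ I1 = 0 \<and> D (nb k) $ I4 = 0 \<and> D (nb k) $ I2 + D (nb k) $ I3 + D (nb k) $ I5 = 0"
    using GI2 GI3 GI5 by (simp add: all_idx5)
  then show ?thesis using D1 D4 by blast
qed


theorem mainTheorem9:
  fixes a d :: "'a::field"
  assumes char: "(2::'a) \<noteq> 0"
    and ha: "a \<noteq> 1/2" and hd: "d \<noteq> 1/2" and hne: "a \<noteq> d"
  shows "{D. is_derivation (lv_mult (alphaA a d)) D} =
         {f. Vector_Spaces.linear (*s) (*s) f \<and> f (nb I1) = 0 \<and> f (nb I4) = 0 \<and>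
             range f \<subseteq> vec.span {nb I2 - nb I3, nb I2 - nb I5}}"
proof (intro set_eqI iffI; simp only: mem_Collect_eq)
  fix D :: "'a^idx5 \<Rightarrow> 'a^idx5" assume der: "is_derivation (lv_mult (alphaA a d)) D"
  have lin: "Vector_Spaces.linear (*s) (*s) D" using der by (simp add: is_derivation_def)
  note S = sub_dir[OF char ha hd hne der]
  have D1: "D (nb I1) = 0" and D4: "D (nb I4) = 0" using S by auto
  have G: "D (nb k) $ I1 = 0 \<and> D (nb k) $ I4 = 0 \<and> D (nb k) $ I2 + D (nb k) $ I3 + D (nb k) $ I5 = 0"
    if "k \<noteq> I1" "k \<noteq> I4" for k using S that by blast
  have "range D \<subseteq> vec.span {nb I2 - nb I3, nb I2 - nb I5}"
  proof
    fix y assume "y \<in> range D"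
    then obtain x where y: "y = D x" by auto
    have e: "D x $ m = x$I2 * D (nb I2) $ m + x$I3 * D (nb I3) $ m + x$I5 * D (nb I5) $ m" for m
      using lin_exp[OF lin, of x m] D1 D4 by (simp add: sum_idx5)
    have g2: "D (nb I2) $ I1 = 0 \<and> D (nb I2) $ I4 = 0 \<and> D (nb I2) $ I2 + D (nb I2) $ I3 + D (nb I2) $ I5 = 0"
      by (rule G) simp_all
    have g3: "D (nb I3) $ I1 = 0 \<and> D (nb I3) $ I4 = 0 \<and> D (nb I3) $ I2 + D (nb I3) $ I3 + D (nb I3) $ I5 = 0"
      by (rule G) simp_all
    have g5: "D (nb I5) $ I1 = 0 \<and> D (nb I5) $ I4 = 0 \<and> D (nb I5) $ I2 + D (nb I5) $ I3 + D (nb I5) $ I5 = 0"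
      by (rule G) simp_all
    have "D x $ I2 + D x $ I3 + D x $ I5 =
      x$I2 * (D (nb I2) $ I2 + D (nb I2) $ I3 + D (nb I2) $ I5) +
      x$I3 * (D (nb I3) $ I2 + D (nb I3) $ I3 + D (nb I3) $ I5) +
      x$I5 * (D (nb I5) $ I2 + D (nb I5) $ I3 + D (nb I5) $ I5)"
      unfolding e by (simp add: algebra_simps)
    then have "D x $ I2 + D x $ I3 + D x $ I5 = 0" using g2 g3 g5 by simp
    moreover have "D x $ I1 = 0" "D x $ I4 = 0" unfolding e using g2 g3 g5 by simp_all
    ultimately show "y \<in> vec.span {nb I2 - nb I3, nb I2 - nb I5}"
      unfolding y span_char by simp
  qed
  then show "Vector_Spaces.linear (*s) (*s) D \<and> D (nb I1) = 0 \<and> D (nb I4) = 0 \<and>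
             range D \<subseteq> vec.span {nb I2 - nb I3, nb I2 - nb I5}" using lin D1 D4 by simp
next
  fix f :: "'a^idx5 \<Rightarrow> 'a^idx5" assume h: "Vector_Spaces.linear (*s) (*s) f \<and> f (nb I1) = 0 \<and> f (nb I4) = 0 \<and>
             range f \<subseteq> vec.span {nb I2 - nb I3, nb I2 - nb I5}"
  then show "is_derivation (lv_mult (alphaA a d)) f"
    unfolding is_derivation_def using sup_dir[OF char] by blast
qed

end
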